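(* Fix $a\in\mathbb{R}$ and $r>0$, and let $k^{\rm opt}_0=a+\sqrt{a^2+1/r}$. For $T>0$ small enough that $aT<1$, let $k^{\rm opt}_T$ denote the minimizer of $J_T(k)=(1+rk^2)f_{a,T}(k)$ over $k\in(a,k_u(a,T))$. Then $$\lim_{T\to0^+}\frac{k^{\rm opt}_T}{k^{\rm opt}_0-\left(a\,k^{\rm opt}_0+\frac1r\right)T}=1 .$$
   Context: For real $a$ and $T>0$ with $aT<1$, $k_u(a,T)$ is the unique solution $k>|a|$ of $T\sqrt{k^2-a^2}=\arccos(a/k)$; the interval $(a,k_u(a,T))$ is exactly the set of real gains $k$ for which $\dot x(t)=ax(t)-kx(t-T)$ is exponentially stable. For such $k$, $f_{a,T}(k)=\int_{-\infty}^{+\infty}\left|j\omega-a+ke^{-jT\omega}\right|^{-2}d\omega$, the squared $\mathcal H_2$-norm of $1/(s-a+ke^{-Ts})$. $(1+rk^2)f_{a,T}(k)$ is the squared $\mathcal H_2$-norm from $v$ to $z=(x,\sqrt r\,u)$ for $\dot x=ax+u+v$, $u(t)=-kx(t-T)$. Note $k^{\rm opt}_0$ is the optimal gain of the delay-free ($T=0$) problem. *)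

theory Defs
  imports "HOL-Analysis.Analysis"
begin

definition k_u :: "real \<Rightarrow> real \<Rightarrow> real" where
  "k_u a T = (THE k. k > \<bar>a\<bar> \<and> T * sqrt (k\<^sup>2 - a\<^sup>2) = arccos (a / k))"

text \<open>Squared H2-norm of 1/(s - a + k e^(-Ts)).\<close>
definition f_aT :: "real \<Rightarrow> real \<Rightarrow> real \<Rightarrow> real" where
  "f_aT a T k = (LINT w|lborel.
     1 / (cmod (\<i> * complex_of_real w - complex_of_real a
                 + complex_of_real k * exp (- \<i> * complex_of_real (T * w))))\<^sup>2)"

definition J_T :: "real \<Rightarrow> real \<Rightarrow> real \<Rightarrow> real \<Rightarrow> real" where
  "J_T a r T k = (1 + r * k\<^sup>2) * f_aT a T k"

definition is_kopt :: "real \<Rightarrow> real \<Rightarrow> real \<Rightarrow> real \<Rightarrow> bool" where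
  "is_kopt a r T k \<longleftrightarrow> k \<in> {a<..<k_u a T} \<and>
     (\<forall>k'\<in>{a<..<k_u a T}. J_T a r T k \<le> J_T a r T k')"

end

theory Submission
  imports Defs
begin


lemma cauchy_int:
  fixes c :: real assumes c: "c > 0"
  shows "integrable lborel (\<lambda>w. 1 / (c\<^sup>2 + w\<^sup>2))"
    and "(LINT w|lborel. 1 / (c\<^sup>2 + w\<^sup>2)) = pi / c"
proof -
  let ?F = "\<lambda>x. arctan (x / c) / c"
  have D: "DERIV ?F x :> 1 / (c\<^sup>2 + x\<^sup>2)" for x
  proof -
    have "c*(c*(c*c)) + c*(c*(x*x)) > 0" using c by (simp add: add_pos_nonneg)
    then show ?thesis
      using c by (auto intro!: derivative_eq_intros simp: field_simps power2_eq_square add_pos_pos)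
  qed
  have ct: "isCont (\<lambda>x. 1 / (c\<^sup>2 + x\<^sup>2)) x" for x
    using c by (auto intro!: continuous_intros simp: add_pos_nonneg)
  have lb: "filterlim (\<lambda>x. x / c) at_bot at_bot"
  proof -
    have "filterlim (\<lambda>x. (1/c) * x) at_bot at_bot"
      by (rule filterlim_tendsto_pos_mult_at_bot[OF tendsto_const]) (use c in \<open>auto intro: filterlim_ident\<close>)
    then show ?thesis by (simp add: field_simps)
  qed
  have lt: "filterlim (\<lambda>x. x / c) at_top at_top"
  proof -
    have "filterlim (\<lambda>x. (1/c) * x) at_top at_top"
      by (rule filterlim_tendsto_pos_mult_at_top[OF tendsto_const]) (use c in \<open>auto intro: filterlim_ident\<close>)
    then show ?thesis by (simp add: field_simps)
  qed
  have A: "((?F \<circ> real_of_ereal) \<longlongrightarrow> (-(pi/2)) / c) (at_right (-\<infinity>))"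
    unfolding ereal_tendsto_simps
    by (intro tendsto_divide tendsto_const filterlim_compose[OF tendsto_arctan_at_bot lb]) (use c in auto)
  have B: "((?F \<circ> real_of_ereal) \<longlongrightarrow> (pi/2) / c) (at_left \<infinity>)"
    unfolding ereal_tendsto_simps
    by (intro tendsto_divide tendsto_const filterlim_compose[OF tendsto_arctan_at_top lt]) (use c in auto)
  have nn: "AE x in lborel. -\<infinity> < ereal x \<longrightarrow> ereal x < \<infinity> \<longrightarrow> 0 \<le> 1 / (c\<^sup>2 + x\<^sup>2)"
    by (auto simp: add_nonneg_nonneg)
  note R = interval_integral_FTC_nonneg[of "-\<infinity>" "\<infinity>" ?F "\<lambda>x. 1 / (c\<^sup>2 + x\<^sup>2)", OF _ D ct nn A B]
  show "integrable lborel (\<lambda>w. 1 / (c\<^sup>2 + w\<^sup>2))"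
    using R(1) by (simp add: set_integrable_def)
  show "(LINT w|lborel. 1 / (c\<^sup>2 + w\<^sup>2)) = pi / c"
    using R(2) by (simp add: interval_lebesgue_integral_def set_lebesgue_integral_def field_simps)
qed

lemma exp_m1_bound: "cmod (exp (- \<i> * complex_of_real x) - 1) \<le> \<bar>x\<bar>"
proof -
  have "exp (- \<i> * complex_of_real x) = exp (\<i> * complex_of_real (-x))" by simp
  then have "cmod (exp (- \<i> * complex_of_real x) - 1) = 2 * \<bar>sin (-x / 2)\<bar>"
    by (simp only: dist_exp_i_1)
  also have "\<dots> \<le> 2 * \<bar>-x/2\<bar>" using abs_sin_x_le_abs_x[of "-x/2"] by simp
  finally show ?thesis by simp
qed

lemma cos_lb: "cos (x::real) \<ge> 1 - x\<^sup>2 / 2"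
proof -
  have "cos x = 1 - 2 * sin (x/2) ^ 2" using cos_double_sin[of "x/2"] by simp
  moreover have "sin (x/2) ^ 2 \<le> (x/2)^2"
    using abs_sin_x_le_abs_x[of "x/2"] by (metis abs_ge_zero power2_abs power_mono)
  ultimately show ?thesis by (simp add: power_divide)
qed

definition H :: "real \<Rightarrow> real \<Rightarrow> real \<Rightarrow> real \<Rightarrow> complex" where
  "H a T k w = \<i> * complex_of_real w - complex_of_real a
                 + complex_of_real k * exp (- \<i> * complex_of_real (T * w))"

lemma f_aT_H: "f_aT a T k = (LINT w|lborel. 1 / (cmod (H a T k w))\<^sup>2)"
  by (simp add: f_aT_def H_def)

lemma H_split: "H a T k w = Complex (k - a) w + complex_of_real k * (exp (- \<i> * complex_of_real (T * w)) - 1)"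
  by (simp add: H_def complex_eq_iff algebra_simps)

lemma H_upper:
  assumes "T \<ge> 0"
  shows "cmod (H a T k w) \<le> (1 + \<bar>k\<bar> * T) * sqrt ((k - a)\<^sup>2 + w\<^sup>2)"
proof -
  let ?S = "sqrt ((k - a)\<^sup>2 + w\<^sup>2)"
  have n1: "cmod (Complex (k - a) w) = ?S" by (simp add: complex_norm)
  have "\<bar>w\<bar> \<le> ?S" by (simp add: real_le_rsqrt)
  have "cmod (complex_of_real k * (exp (- \<i> * complex_of_real (T * w)) - 1)) \<le> \<bar>k\<bar> * \<bar>T * w\<bar>"
    using mult_left_mono[OF exp_m1_bound[of "T*w"] abs_ge_zero[of k]] by (simp add: norm_mult)
  also have "\<dots> \<le> \<bar>k\<bar> * T * ?S"
    using assms \<open>\<bar>w\<bar> \<le> ?S\<close> by (simp add: abs_mult mult_left_mono mult.assoc)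
  finally have "cmod (complex_of_real k * (exp (- \<i> * complex_of_real (T * w)) - 1)) \<le> \<bar>k\<bar> * T * ?S" .
  moreover have "cmod (H a T k w) \<le> cmod (Complex (k - a) w) + cmod (complex_of_real k * (exp (- \<i> * complex_of_real (T * w)) - 1))"
    unfolding H_split by (rule norm_triangle_ineq)
  ultimately have "cmod (H a T k w) \<le> ?S + \<bar>k\<bar> * T * ?S" using n1 by linarith
  then show ?thesis by (simp add: algebra_simps)
qed

lemma H_lower:
  assumes "T \<ge> 0"
  shows "cmod (H a T k w) \<ge> (1 - \<bar>k\<bar> * T) * sqrt ((k - a)\<^sup>2 + w\<^sup>2)"
proof -
  let ?S = "sqrt ((k - a)\<^sup>2 + w\<^sup>2)"
  have n1: "cmod (Complex (k - a) w) = ?S" by (simp add: complex_norm)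
  have "\<bar>w\<bar> \<le> ?S" by (simp add: real_le_rsqrt)
  have "cmod (complex_of_real k * (exp (- \<i> * complex_of_real (T * w)) - 1)) \<le> \<bar>k\<bar> * \<bar>T * w\<bar>"
    using mult_left_mono[OF exp_m1_bound[of "T*w"] abs_ge_zero[of k]] by (simp add: norm_mult)
  also have "\<dots> \<le> \<bar>k\<bar> * T * ?S"
    using assms \<open>\<bar>w\<bar> \<le> ?S\<close> by (simp add: abs_mult mult_left_mono mult.assoc)
  finally have "cmod (complex_of_real k * (exp (- \<i> * complex_of_real (T * w)) - 1)) \<le> \<bar>k\<bar> * T * ?S" .
  moreover have "cmod (Complex (k - a) w) - cmod (complex_of_real k * (exp (- \<i> * complex_of_real (T * w)) - 1)) \<le> cmod (H a T k w)"
    unfolding H_split by (rule norm_diff_ineq)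
  ultimately have "?S - \<bar>k\<bar> * T * ?S \<le> cmod (H a T k w)" using n1 by linarith
  then show ?thesis by (simp add: algebra_simps)
qed



definition gfun :: "real \<Rightarrow> real \<Rightarrow> real \<Rightarrow> real" where
  "gfun a T k = T * sqrt (k\<^sup>2 - a\<^sup>2) - arccos (a / k)"

lemma G1:
  assumes T: "T > 0" and k: "\<bar>a\<bar> < k" and kT: "k * T < 1"
  shows "gfun a T k < 0"
proof -
  have kpos: "k > 0" using k by linarith
  define \<beta> where "\<beta> = sqrt (k\<^sup>2 - a\<^sup>2)"
  have a2: "a\<^sup>2 < k\<^sup>2" using k by (metis abs_ge_zero power2_abs power_strict_mono zero_less_numeral)
  have bpos: "\<beta> > 0" using a2 by (simp add: \<beta>_def)
  have b2: "\<beta>\<^sup>2 = k\<^sup>2 - a\<^sup>2" using a2 by (simp add: \<beta>_def)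
  have bk: "\<beta> \<le> k" using kpos by (simp add: \<beta>_def real_sqrt_le_iff' real_le_lsqrt)
  define x where "x = T * \<beta>"
  have xpos: "x > 0" using T bpos by (simp add: x_def)
  have "x \<le> T * k" using bk T by (simp add: x_def)
  then have x1: "x < 1" using kT by (simp add: mult.commute)
  have x2: "x\<^sup>2 < 1" using x1 xpos by (simp add: power_less_one_iff abs_less_iff)
  have c0: "cos x \<ge> 1 - x\<^sup>2 / 2" by (rule cos_lb)
  have cpos: "cos x > 0" using c0 x2 by linarith
  have cgt: "a / k < cos x"
  proof (cases "a \<le> 0")
    case True
    have "a / k \<le> 0" using True kpos by (simp add: divide_nonpos_pos)
    then show ?thesis using cpos by linarith
  next
    case False
    have "(1 - x\<^sup>2 / 2)\<^sup>2 - (1 - x\<^sup>2) = (x\<^sup>2 / 2)\<^sup>2" by (simp add: power2_diff)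
    then have "(1 - x\<^sup>2) \<le> (1 - x\<^sup>2 / 2)\<^sup>2" by (metis diff_ge_0_iff_ge zero_le_power2)
    also have "\<dots> \<le> (cos x)\<^sup>2" using c0 x2 by (intro power_mono) auto
    finally have A: "1 - x\<^sup>2 \<le> (cos x)\<^sup>2" .
    have kT0: "0 \<le> k * T" using kpos T by simp
    have "(k * T)\<^sup>2 < 1" using power_strict_mono[OF kT kT0, of 2] by simp
    then have "k\<^sup>2 * T\<^sup>2 < 1" by (simp add: power_mult_distrib)
    then have "\<beta>\<^sup>2 * (k\<^sup>2 * T\<^sup>2) < \<beta>\<^sup>2" using bpos by simp
    moreover have "k\<^sup>2 * (1 - x\<^sup>2) - a\<^sup>2 = \<beta>\<^sup>2 - \<beta>\<^sup>2 * (k\<^sup>2 * T\<^sup>2)"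
      using b2 by (simp add: x_def power_mult_distrib algebra_simps)
    ultimately have "a\<^sup>2 < k\<^sup>2 * (1 - x\<^sup>2)" by linarith
    then have "(a / k)\<^sup>2 < 1 - x\<^sup>2" using kpos by (simp add: power_divide divide_less_eq mult.commute)
    then have "(a / k)\<^sup>2 < (cos x)\<^sup>2" using A by linarith
    then show ?thesis using cpos by (meson less_le power_less_imp_less_base)
  qed
  have ak1: "-1 \<le> a / k" using k kpos by (simp add: le_divide_eq)
  have "arccos (cos x) < arccos (a / k)"
    by (rule arccos_less_arccos[OF ak1 cgt cos_le_one])
  moreover have "arccos (cos x) = x"
    using xpos x1 pi_gt3 by (intro arccos_cos) auto
  ultimately show ?thesis by (simp add: gfun_def x_def \<beta>_def)
qed

lemma G_deriv:
  assumes k: "\<bar>a\<bar> < k"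
  shows "DERIV (gfun a T) k :> (T * k\<^sup>2 - a) / (k * sqrt (k\<^sup>2 - a\<^sup>2))"
proof -
  have kpos: "k > 0" using k by linarith
  have a2: "a\<^sup>2 < k\<^sup>2" using k by (metis abs_ge_zero power2_abs power_strict_mono zero_less_numeral)
  have ak: "-1 < a / k" "a / k < 1" using k kpos by (auto simp: divide_less_eq less_divide_eq)
  have s1: "sqrt (1 - (a / k)\<^sup>2) = sqrt (k\<^sup>2 - a\<^sup>2) / k"
  proof -
    have "1 - (a / k)\<^sup>2 = (k\<^sup>2 - a\<^sup>2) / k\<^sup>2" using kpos by (simp add: field_simps power2_eq_square)
    then show ?thesis using kpos by (simp add: real_sqrt_divide)
  qed
  have sp: "sqrt (k\<^sup>2 - a\<^sup>2) > 0" using a2 by simp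
  have d1: "DERIV (\<lambda>k. a / k) k :> - (a / k\<^sup>2)"
    using kpos by (auto intro!: derivative_eq_intros simp: power2_eq_square field_simps)
  have d2: "DERIV (\<lambda>k. arccos (a / k)) k :> inverse (- sqrt (1 - (a / k)\<^sup>2)) * (- (a / k\<^sup>2))"
    by (rule DERIV_chain2[OF DERIV_arccos d1]) (use ak in auto)
  have d0: "DERIV (\<lambda>k. k\<^sup>2 - a\<^sup>2) k :> 2 * k"
    by (auto intro!: derivative_eq_intros)
  have d3: "DERIV (\<lambda>k. sqrt (k\<^sup>2 - a\<^sup>2)) k :> inverse (sqrt (k\<^sup>2 - a\<^sup>2)) / 2 * (2 * k)"
    by (rule DERIV_chain2[OF DERIV_real_sqrt d0]) (use a2 in auto)
  have "DERIV (gfun a T) k :> T * (inverse (sqrt (k\<^sup>2 - a\<^sup>2)) / 2 * (2 * k)) - (inverse (- sqrt (1 - (a / k)\<^sup>2)) * (- (a / k\<^sup>2)))"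
    unfolding gfun_def by (intro DERIV_diff DERIV_cmult d2 d3)
  moreover have "T * (inverse (sqrt (k\<^sup>2 - a\<^sup>2)) / 2 * (2 * k)) - (inverse (- sqrt (1 - (a / k)\<^sup>2)) * (- (a / k\<^sup>2)))
      = (T * k\<^sup>2 - a) / (k * sqrt (k\<^sup>2 - a\<^sup>2))"
    unfolding s1 using kpos sp by (simp add: field_simps power2_eq_square)
  ultimately show ?thesis by simp
qed



lemma G_mono:
  assumes T: "T > 0" and aT: "\<bar>a\<bar> * T < 1" and k1: "1 / T \<le> k1" and k12: "k1 < k2"
  shows "gfun a T k1 < gfun a T k2"
proof (rule DERIV_pos_imp_increasing[OF k12])
  fix x assume x: "k1 \<le> x" "x \<le> k2"
  have aT': "\<bar>a\<bar> < 1 / T" using aT T by (simp add: less_divide_eq)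
  have xa: "\<bar>a\<bar> < x" using aT' k1 x by linarith
  have "1 \<le> k1 * T" using k1 T by (simp add: divide_le_eq)
  then have xT: "1 \<le> x * T" using mult_right_mono[of k1 x T] x T by linarith
  have xpos: "x > 0" using xa by linarith
  have "x * 1 \<le> x * (x * T)" by (rule mult_left_mono[OF xT]) (use xpos in simp)
  then have "x \<le> T * x\<^sup>2" by (simp add: power2_eq_square algebra_simps)
  then have num: "T * x\<^sup>2 - a > 0" using xa by linarith
  have a2: "a\<^sup>2 < x\<^sup>2" using xa by (metis abs_ge_zero power2_abs power_strict_mono zero_less_numeral)
  have "(T * x\<^sup>2 - a) / (x * sqrt (x\<^sup>2 - a\<^sup>2)) > 0" using num xpos a2 by simp
  then show "\<exists>y. DERIV (gfun a T) x :> y \<and> y > 0" using G_deriv[OF xa] by blast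
qed

lemma G_cont:
  assumes "\<bar>a\<bar> < k" shows "isCont (gfun a T) k"
  using G_deriv[OF assms] by (rule DERIV_isCont)

lemma ku_props:
  assumes T: "T > 0" and aT: "\<bar>a\<bar> * T < 1"
  shows "\<bar>a\<bar> < k_u a T" "gfun a T (k_u a T) = 0" "1 / T \<le> k_u a T"
    "\<And>k. \<bar>a\<bar> < k \<Longrightarrow> k < k_u a T \<Longrightarrow> gfun a T k < 0"
    "k_u a T * T \<le> \<bar>a\<bar> * T + pi"
proof -
  have aT': "\<bar>a\<bar> < 1 / T" using aT T by (simp add: less_divide_eq)
  define k1 where "k1 = (\<bar>a\<bar> + 1 / T) / 2"
  have k1: "\<bar>a\<bar> < k1" "k1 < 1 / T" using aT' by (auto simp: k1_def)
  have g1: "gfun a T k1 < 0"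
    by (rule G1[OF T k1(1)]) (use k1(2) T in \<open>simp add: less_divide_eq\<close>)
  define k2 where "k2 = sqrt (a\<^sup>2 + (4 / T)\<^sup>2)"
  have "sqrt (a\<^sup>2) < k2" unfolding k2_def using T by (intro real_sqrt_less_mono) simp
  then have k2a: "\<bar>a\<bar> < k2" by simp
  have "sqrt ((4/T)\<^sup>2) \<le> k2" unfolding k2_def by (intro real_sqrt_le_mono) simp
  then have k2T: "4 / T \<le> k2" using T by simp
  have "1 / T < 4 / T" using T by (simp add: divide_strict_right_mono)
  then have k12: "k1 < k2" using k1 k2T by linarith
  have "k2\<^sup>2 - a\<^sup>2 = (4/T)\<^sup>2" unfolding k2_def by (simp add: add_nonneg_nonneg)
  then have "T * sqrt (k2\<^sup>2 - a\<^sup>2) = 4" using T by simp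
  moreover have "arccos (a / k2) \<le> pi"
    using k2a by (intro arccos_ubound) (auto simp: divide_le_eq le_divide_eq)
  ultimately have g2: "gfun a T k2 > 0" using pi_less_4 unfolding gfun_def by linarith
  have "continuous_on {k1..k2} (gfun a T)"
    using k1 by (intro continuous_at_imp_continuous_on ballI G_cont) auto
  then obtain k3 where k3: "k1 \<le> k3" "k3 \<le> k2" "gfun a T k3 = 0"
    using IVT'[of "gfun a T" k1 0 k2] g1 g2 k12 by auto
  have root_ge: "1 / T \<le> k" if "\<bar>a\<bar> < k" "gfun a T k = 0" for k
  proof (rule ccontr)
    assume "\<not> 1 / T \<le> k"
    then have "k < 1 / T" by simp
    then have "k * T < 1" using T by (simp add: less_divide_eq)
    then show False using G1[OF T that(1)] that(2) by simp
  qed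
  have k3a: "\<bar>a\<bar> < k3" using k3 k1 by linarith
  have uniq: "k = k3" if "\<bar>a\<bar> < k" "gfun a T k = 0" for k
  proof (rule ccontr)
    assume ne: "k \<noteq> k3"
    have "1 / T \<le> k" "1 / T \<le> k3" using root_ge that root_ge k3a k3 by auto
    then show False using ne G_mono[OF T aT, of k k3] G_mono[OF T aT, of k3 k] that k3
      by (cases "k < k3") auto
  qed
  have P: "\<bar>a\<bar> < k3 \<and> T * sqrt (k3\<^sup>2 - a\<^sup>2) = arccos (a / k3)" using k3a k3 by (simp add: gfun_def)
  have ku: "k_u a T = k3" unfolding k_u_def
  proof (rule the_equality)
    show "\<bar>a\<bar> < k3 \<and> T * sqrt (k3\<^sup>2 - a\<^sup>2) = arccos (a / k3)" by (rule P)
    fix k assume "\<bar>a\<bar> < k \<and> T * sqrt (k\<^sup>2 - a\<^sup>2) = arccos (a / k)"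
    then show "k = k3" using uniq by (simp add: gfun_def)
  qed
  show "\<bar>a\<bar> < k_u a T" using ku k3a by simp
  show "gfun a T (k_u a T) = 0" using ku k3 by simp
  show kuT: "1 / T \<le> k_u a T" using ku root_ge k3a k3 by simp
  show "gfun a T k < 0" if "\<bar>a\<bar> < k" "k < k_u a T" for k
  proof (cases "k * T < 1")
    case True then show ?thesis using G1[OF T that(1)] by simp
  next
    case False
    then have "1 / T \<le> k" using T by (simp add: divide_le_eq mult.commute)
    then show ?thesis using G_mono[OF T aT _ that(2)] ku k3 by simp
  qed
  show "k_u a T * T \<le> \<bar>a\<bar> * T + pi"
  proof -
    let ?k = "k_u a T"
    have kpos: "?k > 0" using ku k3a by linarith
    define \<beta> where "\<beta> = sqrt (?k\<^sup>2 - a\<^sup>2)"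
    have a2: "a\<^sup>2 < ?k\<^sup>2" using ku k3a by (metis abs_ge_zero power2_abs power_strict_mono zero_less_numeral)
    have b0: "\<beta> \<ge> 0" using a2 by (simp add: \<beta>_def)
    have "T * \<beta> = arccos (a / ?k)" using P ku by (simp add: \<beta>_def)
    also have "\<dots> \<le> pi" using ku k3a kpos by (intro arccos_ubound) (auto simp: divide_le_eq le_divide_eq)
    finally have Tb: "T * \<beta> \<le> pi" .
    have "?k\<^sup>2 = a\<^sup>2 + \<beta>\<^sup>2" using a2 by (simp add: \<beta>_def)
    also have "\<dots> \<le> (\<bar>a\<bar> + \<beta>)\<^sup>2" using b0 by (simp add: power2_sum)
    finally have "?k \<le> \<bar>a\<bar> + \<beta>" using b0 kpos by (metis abs_ge_zero add_nonneg_nonneg power2_le_imp_le)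
    then have "?k * T \<le> (\<bar>a\<bar> + \<beta>) * T" using T by (simp add: mult_right_mono)
    then show ?thesis using Tb by (simp add: algebra_simps)
  qed
qed



lemma H_eq: "H a T k w = Complex (k * cos (T * w) - a) (w - k * sin (T * w))"
  by (simp add: H_def complex_eq_iff Re_exp Im_exp)

lemma H_cont: "continuous_on UNIV (H a T k)"
  unfolding H_def by (intro continuous_intros)

lemma H_meas0[measurable]: "H a T k \<in> borel_measurable borel"
  by (rule borel_measurable_continuous_onI[OF H_cont])

lemma H_meas: "(\<lambda>w. 1 / (cmod (H a T k w))\<^sup>2) \<in> borel_measurable lborel"
  by measurable

lemma H_nonzero:
  assumes T: "T > 0" and aT: "\<bar>a\<bar> * T < 1" and k: "a < k" "k < k_u a T"
  shows "H a T k w \<noteq> 0"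
proof
  assume "H a T k w = 0"
  then have re: "k * cos (T * w) = a" and im: "k * sin (T * w) = w"
    unfolding H_eq by (auto simp: complex_eq_iff)
  have w0: "w \<noteq> 0"
  proof
    assume "w = 0" then show False using re k by simp
  qed
  have kk: "k\<^sup>2 = a\<^sup>2 + w\<^sup>2"
  proof -
    have "(k * cos (T * w))\<^sup>2 + (k * sin (T * w))\<^sup>2 = k\<^sup>2 * ((sin (T * w))\<^sup>2 + (cos (T * w))\<^sup>2)"
      by (simp only: power_mult_distrib distrib_left add.commute)
    also have "\<dots> = k\<^sup>2" by (simp only: sin_cos_squared_add mult_1_right)
    finally show ?thesis using re im by simp
  qed
  have "\<bar>a\<bar>\<^sup>2 < \<bar>k\<bar>\<^sup>2" using kk w0 by simp
  then have "\<bar>a\<bar> < \<bar>k\<bar>" by (meson abs_ge_zero power_less_imp_less_base)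
  then have ka: "\<bar>a\<bar> < k" using k by (cases "k < 0") auto
  have kpos: "k > 0" using ka by linarith
  define v where "v = \<bar>w\<bar>"
  have vpos: "v > 0" using w0 by (simp add: v_def)
  have cv: "cos (T * v) = a / k"
  proof -
    have "cos (T * v) = cos (T * w)" by (cases "w \<ge> 0") (auto simp: v_def)
    then show ?thesis using re kpos by (simp add: field_simps)
  qed
  have sv: "sqrt (k\<^sup>2 - a\<^sup>2) = v" using kk by (simp add: v_def)
  have "gfun a T k < 0" using ku_props(4)[OF T aT ka k(2)] .
  then have lt: "T * v < arccos (a / k)" by (simp add: gfun_def sv)
  have "arccos (a / k) \<le> pi" using ka kpos by (intro arccos_ubound) (auto simp: divide_le_eq le_divide_eq)
  then have "arccos (cos (T * v)) = T * v" using lt vpos T by (intro arccos_cos) auto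
  then show False using lt cv by simp
qed

lemma sq_S: "(sqrt ((k - a)\<^sup>2 + w\<^sup>2))\<^sup>2 = (k - a)\<^sup>2 + w\<^sup>2"
  by (simp add: add_nonneg_nonneg)

lemma pt_upper:
  assumes T: "T \<ge> 0" and k: "a < k" and kT: "\<bar>k\<bar> * T < 1"
  shows "1 / (cmod (H a T k w))\<^sup>2 \<le> 1 / (1 - \<bar>k\<bar> * T)\<^sup>2 * (1 / ((k - a)\<^sup>2 + w\<^sup>2))"
proof -
  let ?S = "sqrt ((k - a)\<^sup>2 + w\<^sup>2)"
  have Sp: "?S > 0" using k by (simp add: add_pos_nonneg)
  have l: "(1 - \<bar>k\<bar> * T) * ?S \<le> cmod (H a T k w)" by (rule H_lower[OF T])
  have lp: "(1 - \<bar>k\<bar> * T) * ?S > 0" using kT Sp by simp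
  have "((1 - \<bar>k\<bar> * T) * ?S)\<^sup>2 \<le> (cmod (H a T k w))\<^sup>2" using l lp by (intro power_mono) auto
  moreover have hp: "cmod (H a T k w) > 0" using l lp by linarith
  ultimately have "1 / (cmod (H a T k w))\<^sup>2 \<le> 1 / ((1 - \<bar>k\<bar> * T) * ?S)\<^sup>2"
    using lp by (intro divide_left_mono) (auto intro!: mult_pos_pos)
  also have "\<dots> = 1 / (1 - \<bar>k\<bar> * T)\<^sup>2 * (1 / ((k - a)\<^sup>2 + w\<^sup>2))"
    by (simp add: power_mult_distrib sq_S)
  finally show ?thesis .
qed

lemma pt_lower:
  assumes T: "T \<ge> 0" and k: "a < k" and nz: "H a T k w \<noteq> 0"
  shows "1 / (1 + \<bar>k\<bar> * T)\<^sup>2 * (1 / ((k - a)\<^sup>2 + w\<^sup>2)) \<le> 1 / (cmod (H a T k w))\<^sup>2"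
proof -
  let ?S = "sqrt ((k - a)\<^sup>2 + w\<^sup>2)"
  have u: "cmod (H a T k w) \<le> (1 + \<bar>k\<bar> * T) * ?S" by (rule H_upper[OF T])
  have hp: "cmod (H a T k w) > 0" using nz by simp
  have "\<bar>k\<bar> * T \<ge> 0" using T by simp
  then have "1 + \<bar>k\<bar> * T \<noteq> 0" by linarith
  note hp = hp this
  have sq: "(cmod (H a T k w))\<^sup>2 \<le> ((1 + \<bar>k\<bar> * T) * ?S)\<^sup>2" using power_mono[OF u norm_ge_zero, of 2] by simp
  have "1 / ((1 + \<bar>k\<bar> * T) * ?S)\<^sup>2 \<le> 1 / (cmod (H a T k w))\<^sup>2"
    by (rule divide_left_mono[OF sq]) (use hp T k in \<open>auto intro!: mult_pos_pos add_pos_nonneg simp: add_nonneg_eq_0_iff\<close>)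
  moreover have "1 / ((1 + \<bar>k\<bar> * T) * ?S)\<^sup>2 = 1 / (1 + \<bar>k\<bar> * T)\<^sup>2 * (1 / ((k - a)\<^sup>2 + w\<^sup>2))"
    by (simp add: power_mult_distrib sq_S)
  ultimately show ?thesis by simp
qed

lemma f_upper:
  assumes T: "T \<ge> 0" and k: "a < k" and kT: "\<bar>k\<bar> * T < 1"
  shows "integrable lborel (\<lambda>w. 1 / (cmod (H a T k w))\<^sup>2)"
    and "f_aT a T k \<le> pi / ((1 - \<bar>k\<bar> * T)\<^sup>2 * (k - a))"
proof -
  have c: "k - a > 0" using k by simp
  have I: "integrable lborel (\<lambda>w. 1 / (1 - \<bar>k\<bar> * T)\<^sup>2 * (1 / ((k - a)\<^sup>2 + w\<^sup>2)))"
    by (intro integrable_mult_right cauchy_int(1)[OF c])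
  show int: "integrable lborel (\<lambda>w. 1 / (cmod (H a T k w))\<^sup>2)"
    by (rule Bochner_Integration.integrable_bound[OF I H_meas]) (use pt_upper[OF T k kT] in \<open>auto simp: add_nonneg_nonneg\<close>)
  have "f_aT a T k \<le> (LINT w|lborel. 1 / (1 - \<bar>k\<bar> * T)\<^sup>2 * (1 / ((k - a)\<^sup>2 + w\<^sup>2)))"
    unfolding f_aT_H by (rule integral_mono[OF int I]) (rule pt_upper[OF T k kT])
  also have "\<dots> = 1 / (1 - \<bar>k\<bar> * T)\<^sup>2 * (pi / (k - a))"
    by (subst integral_mult_right_zero) (simp only: cauchy_int(2)[OF c])
  finally show "f_aT a T k \<le> pi / ((1 - \<bar>k\<bar> * T)\<^sup>2 * (k - a))" by simp
qed

lemma f_lower: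
  assumes T: "T \<ge> 0" and k: "a < k" and nz: "\<And>w. H a T k w \<noteq> 0"
    and int: "integrable lborel (\<lambda>w. 1 / (cmod (H a T k w))\<^sup>2)"
  shows "pi / ((1 + \<bar>k\<bar> * T)\<^sup>2 * (k - a)) \<le> f_aT a T k"
proof -
  have c: "k - a > 0" using k by simp
  have I: "integrable lborel (\<lambda>w. 1 / (1 + \<bar>k\<bar> * T)\<^sup>2 * (1 / ((k - a)\<^sup>2 + w\<^sup>2)))"
    by (intro integrable_mult_right cauchy_int(1)[OF c])
  have "(LINT w|lborel. 1 / (1 + \<bar>k\<bar> * T)\<^sup>2 * (1 / ((k - a)\<^sup>2 + w\<^sup>2))) \<le> f_aT a T k"
    unfolding f_aT_H by (rule integral_mono[OF I int]) (rule pt_lower[OF T k nz])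
  moreover have "(LINT w|lborel. 1 / (1 + \<bar>k\<bar> * T)\<^sup>2 * (1 / ((k - a)\<^sup>2 + w\<^sup>2))) = 1 / (1 + \<bar>k\<bar> * T)\<^sup>2 * (pi / (k - a))"
    by (subst integral_mult_right_zero) (simp only: cauchy_int(2)[OF c])
  ultimately show ?thesis by simp
qed



lemma f_int_general:
  assumes T: "T > 0" and aT: "\<bar>a\<bar> * T < 1" and k: "a < k" "k < k_u a T"
  shows "integrable lborel (\<lambda>w. 1 / (cmod (H a T k w))\<^sup>2)"
proof -
  have nz: "H a T k w \<noteq> 0" for w using H_nonzero[OF T aT k] .
  define R where "R = 2 * \<bar>k\<bar> + 1"
  have R1: "R \<ge> 1" by (simp add: R_def)
  have cont: "continuous_on (cball 0 R) (\<lambda>w. cmod (H a T k w))"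
    by (intro continuous_on_norm continuous_on_subset[OF H_cont]) auto
  obtain w0 where w0: "w0 \<in> cball 0 R" "\<And>w. w \<in> cball 0 R \<Longrightarrow> cmod (H a T k w0) \<le> cmod (H a T k w)"
    using continuous_attains_inf[OF compact_cball _ cont] R1 by auto
  define m where "m = cmod (H a T k w0)"
  have mpos: "m > 0" using nz by (simp add: m_def)
  define C where "C = 8 + (1 + R\<^sup>2) / m\<^sup>2"
  have bound: "1 / (cmod (H a T k w))\<^sup>2 \<le> C * (1 / (1\<^sup>2 + w\<^sup>2))" for w
  proof (cases "\<bar>w\<bar> \<le> R")
    case True
    then have "m \<le> cmod (H a T k w)" using w0(2)[of w] by (simp add: m_def dist_real_def)
    then have "m\<^sup>2 \<le> (cmod (H a T k w))\<^sup>2" using mpos by (intro power_mono) auto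
    then have "1 / (cmod (H a T k w))\<^sup>2 \<le> 1 / m\<^sup>2" using mpos nz[of w] by (intro divide_left_mono) auto
    also have "\<dots> = ((1 + R\<^sup>2) / m\<^sup>2) * (1 / (1 + R\<^sup>2))"
    proof -
      have "1 + R\<^sup>2 > 0" by (simp add: add_pos_nonneg)
      then show ?thesis by simp
    qed
    also have "\<dots> \<le> ((1 + R\<^sup>2) / m\<^sup>2) * (1 / (1 + w\<^sup>2))"
    proof (intro mult_left_mono divide_left_mono)
      have "\<bar>w\<bar>\<^sup>2 \<le> R\<^sup>2" using True by (intro power_mono) auto
      then show "1 + w\<^sup>2 \<le> 1 + R\<^sup>2" by simp
    qed (auto simp: add_pos_nonneg)
    also have "\<dots> \<le> C * (1 / (1\<^sup>2 + w\<^sup>2))" unfolding C_def power_one by (intro mult_right_mono) (auto simp: add_pos_nonneg)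
    finally show ?thesis .
  next
    case False
    have "\<bar>Im (H a T k w)\<bar> \<le> cmod (H a T k w)" by (rule abs_Im_le_cmod)
    moreover have "Im (H a T k w) = w - k * sin (T * w)" by (simp add: H_eq)
    moreover have "\<bar>k * sin (T * w)\<bar> \<le> \<bar>k\<bar>" by (simp add: abs_mult mult_left_le)
    ultimately have "\<bar>w\<bar> - \<bar>k\<bar> \<le> cmod (H a T k w)" by linarith
    moreover have "\<bar>w\<bar> / 2 \<le> \<bar>w\<bar> - \<bar>k\<bar>" using False by (simp add: R_def)
    ultimately have l: "\<bar>w\<bar> / 2 \<le> cmod (H a T k w)" by linarith
    have wpos: "\<bar>w\<bar> > 0" using False R1 by linarith
    have "(\<bar>w\<bar> / 2)\<^sup>2 \<le> (cmod (H a T k w))\<^sup>2" using l wpos by (intro power_mono) auto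
    then have "1 / (cmod (H a T k w))\<^sup>2 \<le> 1 / (\<bar>w\<bar> / 2)\<^sup>2" using wpos nz[of w] by (intro divide_left_mono) auto
    also have "\<dots> = 4 / w\<^sup>2" by (simp add: power_divide)
    also have "\<dots> \<le> 8 / (1 + w\<^sup>2)"
    proof -
      have w1: "1 \<le> w\<^sup>2" using False R1 by (metis abs_ge_zero less_le_not_le linorder_linear one_le_power order_trans power2_abs)
      then have "4 * (1 + w\<^sup>2) \<le> 8 * w\<^sup>2" by simp
      then show ?thesis using w1 by (simp add: divide_simps)
    qed
    also have "\<dots> = 8 * (1 / (1 + w\<^sup>2))" by simp
    also have "\<dots> \<le> C * (1 / (1\<^sup>2 + w\<^sup>2))"
      unfolding C_def power_one by (intro mult_right_mono) (auto simp: add_pos_nonneg)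
    finally show ?thesis .
  qed
  have I: "integrable lborel (\<lambda>w. C * (1 / (1\<^sup>2 + w\<^sup>2)))"
    by (intro integrable_mult_right cauchy_int(1)) simp
  show ?thesis
    by (rule Bochner_Integration.integrable_bound[OF I H_meas])
       (use bound in \<open>auto simp: add_nonneg_nonneg C_def\<close>)
qed

lemma inv_sq_diff:
  fixes A B m :: real
  assumes m: "0 < m" "m \<le> A" "m \<le> B"
  shows "\<bar>1 / A\<^sup>2 - 1 / B\<^sup>2\<bar> \<le> \<bar>A - B\<bar> * (2 / m ^ 3)"
proof -
  have Ap: "A > 0" and Bp: "B > 0" using m by auto
  have eq: "1 / A\<^sup>2 - 1 / B\<^sup>2 = (B - A) * (1 / (A * B\<^sup>2) + 1 / (A\<^sup>2 * B))"
    using Ap Bp by (simp add: field_simps power2_eq_square)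
  have "m * (m * m) \<le> A * (B * B)" by (intro mult_mono) (use m in auto)
  then have "m ^ 3 \<le> A * B\<^sup>2" by (simp add: power3_eq_cube power2_eq_square)
  then have t1: "1 / (A * B\<^sup>2) \<le> 1 / m ^ 3" using m by (intro divide_left_mono) auto
  have "(m * m) * m \<le> (A * A) * B" by (intro mult_mono) (use m in auto)
  then have "m ^ 3 \<le> A\<^sup>2 * B" by (simp add: power3_eq_cube power2_eq_square)
  then have t2: "1 / (A\<^sup>2 * B) \<le> 1 / m ^ 3" using m by (intro divide_left_mono) auto
  have pos: "0 \<le> 1 / (A * B\<^sup>2) + 1 / (A\<^sup>2 * B)" using Ap Bp by simp
  have "\<bar>1 / A\<^sup>2 - 1 / B\<^sup>2\<bar> = \<bar>A - B\<bar> * (1 / (A * B\<^sup>2) + 1 / (A\<^sup>2 * B))"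
    unfolding eq using pos by (simp add: abs_mult abs_minus_commute)
  also have "\<dots> \<le> \<bar>A - B\<bar> * (2 / m ^ 3)" using t1 t2 by (intro mult_left_mono) auto
  finally show ?thesis .
qed



lemma H_diff: "cmod (H a T k1 w - H a T k2 w) = \<bar>k1 - k2\<bar>"
proof -
  have "H a T k1 w - H a T k2 w = complex_of_real (k1 - k2) * exp (- \<i> * complex_of_real (T * w))"
    by (simp add: H_def algebra_simps)
  moreover have "cmod (exp (- \<i> * complex_of_real (T * w))) = 1"
    by (simp add: norm_exp)
  ultimately show ?thesis by (simp add: norm_mult del: of_real_diff)
qed

lemma pt_lip:
  assumes T: "T \<ge> 0" and d: "\<delta> > 0"
    and k1: "a + \<delta> \<le> k1" "\<bar>k1\<bar> * T \<le> 1/2" and k2: "a + \<delta> \<le> k2" "\<bar>k2\<bar> * T \<le> 1/2"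
  shows "1 / (cmod (H a T k1 w))\<^sup>2 - 1 / (cmod (H a T k2 w))\<^sup>2 \<le> \<bar>k1 - k2\<bar> * (16 / \<delta> * (1 / (\<delta>\<^sup>2 + w\<^sup>2)))"
proof -
  define q where "q = sqrt (\<delta>\<^sup>2 + w\<^sup>2)"
  have qd: "\<delta> \<le> q" unfolding q_def by (simp add: real_le_rsqrt)
  have qp: "q > 0" using qd d by linarith
  have q2: "q\<^sup>2 = \<delta>\<^sup>2 + w\<^sup>2" unfolding q_def by (simp add: add_nonneg_nonneg)
  have lowb: "q / 2 \<le> cmod (H a T k w)" if k: "a + \<delta> \<le> k" "\<bar>k\<bar> * T \<le> 1/2" for k
  proof -
    have "\<delta>\<^sup>2 \<le> (k - a)\<^sup>2" using k d by (intro power_mono) auto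
    then have "q \<le> sqrt ((k - a)\<^sup>2 + w\<^sup>2)" unfolding q_def by (intro real_sqrt_le_mono) simp
    moreover have "(1 - \<bar>k\<bar> * T) * sqrt ((k - a)\<^sup>2 + w\<^sup>2) \<le> cmod (H a T k w)" by (rule H_lower[OF T])
    moreover have "1/2 * sqrt ((k - a)\<^sup>2 + w\<^sup>2) \<le> (1 - \<bar>k\<bar> * T) * sqrt ((k - a)\<^sup>2 + w\<^sup>2)"
      using k by (intro mult_right_mono) auto
    ultimately show ?thesis by linarith
  qed
  have "\<bar>1 / (cmod (H a T k1 w))\<^sup>2 - 1 / (cmod (H a T k2 w))\<^sup>2\<bar>
        \<le> \<bar>cmod (H a T k1 w) - cmod (H a T k2 w)\<bar> * (2 / (q / 2) ^ 3)"
    by (rule inv_sq_diff) (use qp lowb[OF k1] lowb[OF k2] in auto)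
  also have "\<dots> \<le> \<bar>k1 - k2\<bar> * (2 / (q / 2) ^ 3)"
  proof (rule mult_right_mono)
    show "\<bar>cmod (H a T k1 w) - cmod (H a T k2 w)\<bar> \<le> \<bar>k1 - k2\<bar>"
      using norm_triangle_ineq3[of "H a T k1 w" "H a T k2 w"] H_diff[of a T k1 w k2] by simp
  qed (use qp in simp)
  also have "\<dots> \<le> \<bar>k1 - k2\<bar> * (16 / \<delta> * (1 / (\<delta>\<^sup>2 + w\<^sup>2)))"
  proof (rule mult_left_mono)
    have "2 / (q / 2) ^ 3 = 16 / (q * q\<^sup>2)" by (simp add: power3_eq_cube power2_eq_square)
    also have "\<dots> \<le> 16 / (\<delta> * q\<^sup>2)" using qd qp d by (intro divide_left_mono mult_right_mono) auto
    also have "\<dots> = 16 / \<delta> * (1 / (\<delta>\<^sup>2 + w\<^sup>2))" using q2 by simp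
    finally show "2 / (q / 2) ^ 3 \<le> 16 / \<delta> * (1 / (\<delta>\<^sup>2 + w\<^sup>2))" .
  qed simp
  finally show ?thesis by linarith
qed

lemma f_lip:
  assumes T: "T \<ge> 0" and d: "\<delta> > 0"
    and k1: "a + \<delta> \<le> k1" "\<bar>k1\<bar> * T \<le> 1/2" and k2: "a + \<delta> \<le> k2" "\<bar>k2\<bar> * T \<le> 1/2"
  shows "f_aT a T k1 - f_aT a T k2 \<le> \<bar>k1 - k2\<bar> * (16 / \<delta> * (pi / \<delta>))"
proof -
  have i1: "integrable lborel (\<lambda>w. 1 / (cmod (H a T k1 w))\<^sup>2)"
    by (rule f_upper(1)[OF T]) (use k1 d in auto)
  have i2: "integrable lborel (\<lambda>w. 1 / (cmod (H a T k2 w))\<^sup>2)"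
    by (rule f_upper(1)[OF T]) (use k2 d in auto)
  have I: "integrable lborel (\<lambda>w. \<bar>k1 - k2\<bar> * (16 / \<delta> * (1 / (\<delta>\<^sup>2 + w\<^sup>2))))"
    by (intro integrable_mult_right cauchy_int(1) d)
  have "f_aT a T k1 - f_aT a T k2 = (LINT w|lborel. 1 / (cmod (H a T k1 w))\<^sup>2 - 1 / (cmod (H a T k2 w))\<^sup>2)"
    unfolding f_aT_H by (rule Bochner_Integration.integral_diff[OF i1 i2, symmetric])
  also have "\<dots> \<le> (LINT w|lborel. \<bar>k1 - k2\<bar> * (16 / \<delta> * (1 / (\<delta>\<^sup>2 + w\<^sup>2))))"
    by (rule integral_mono[OF Bochner_Integration.integrable_diff[OF i1 i2] I]) (rule pt_lip[OF T d k1 k2])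
  also have "\<dots> = \<bar>k1 - k2\<bar> * (16 / \<delta> * (pi / \<delta>))"
    by (simp only: integral_mult_right_zero cauchy_int(2)[OF d])
  finally show ?thesis .
qed

lemma J_cont:
  assumes T: "T \<ge> 0" and d: "\<delta> > 0" and K: "K \<ge> 0" and KT: "(\<bar>a\<bar> + K) * T \<le> 1/2"
  shows "continuous_on {a + \<delta>..K} (J_T a r T)"
proof -
  have kb: "a + \<delta> \<le> k \<and> \<bar>k\<bar> * T \<le> 1/2" if "k \<in> {a + \<delta>..K}" for k
  proof -
    have "\<bar>k\<bar> \<le> \<bar>a\<bar> + K" using that K d by auto
    then have "\<bar>k\<bar> * T \<le> (\<bar>a\<bar> + K) * T" using T by (intro mult_right_mono) auto
    then show ?thesis using that KT by auto
  qed
  have "(16 / \<delta> * (pi / \<delta>))-lipschitz_on {a + \<delta>..K} (f_aT a T)"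
  proof (rule lipschitz_onI)
    fix x y assume x: "x \<in> {a + \<delta>..K}" and y: "y \<in> {a + \<delta>..K}"
    have "f_aT a T x - f_aT a T y \<le> \<bar>x - y\<bar> * (16 / \<delta> * (pi / \<delta>))"
      using kb[OF x] kb[OF y] by (intro f_lip[OF T d]) auto
    moreover have "f_aT a T y - f_aT a T x \<le> \<bar>y - x\<bar> * (16 / \<delta> * (pi / \<delta>))"
      using kb[OF x] kb[OF y] by (intro f_lip[OF T d]) auto
    ultimately show "dist (f_aT a T x) (f_aT a T y) \<le> 16 / \<delta> * (pi / \<delta>) * dist x y"
      by (simp add: dist_real_def abs_minus_commute mult.commute abs_le_iff)
  qed (use d in simp)
  then have "continuous_on {a + \<delta>..K} (f_aT a T)" by (rule lipschitz_on_continuous_on)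
  then show ?thesis unfolding J_T_def[abs_def] by (intro continuous_intros)
qed



lemma J_lower:
  assumes T: "T > 0" and aT: "\<bar>a\<bar> * T < 1" and k: "a < k" "k < k_u a T" and r: "r > 0"
  shows "pi * (1 + r * k\<^sup>2) / (k - a) / (1 + \<bar>k\<bar> * T)\<^sup>2 \<le> J_T a r T k"
proof -
  have f: "pi / ((1 + \<bar>k\<bar> * T)\<^sup>2 * (k - a)) \<le> f_aT a T k"
    using f_lower[of T a k] T k H_nonzero[OF T aT k] f_int_general[OF T aT k] by auto
  have p: "1 + r * k\<^sup>2 \<ge> 0" using r by (simp add: add_nonneg_nonneg)
  have "pi * (1 + r * k\<^sup>2) / (k - a) / (1 + \<bar>k\<bar> * T)\<^sup>2 = (1 + r * k\<^sup>2) * (pi / ((1 + \<bar>k\<bar> * T)\<^sup>2 * (k - a)))"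
    by (simp add: field_simps)
  also have "\<dots> \<le> (1 + r * k\<^sup>2) * f_aT a T k" using f p by (rule mult_left_mono)
  finally show ?thesis by (simp add: J_T_def)
qed

lemma J_upper:
  assumes T: "T \<ge> 0" and k: "a < k" and kT: "\<bar>k\<bar> * T < 1" and r: "r > 0"
  shows "J_T a r T k \<le> pi * (1 + r * k\<^sup>2) / (k - a) / (1 - \<bar>k\<bar> * T)\<^sup>2"
proof -
  have f: "f_aT a T k \<le> pi / ((1 - \<bar>k\<bar> * T)\<^sup>2 * (k - a))" by (rule f_upper(2)[OF T k kT])
  have p: "1 + r * k\<^sup>2 \<ge> 0" using r by (simp add: add_nonneg_nonneg)
  have "J_T a r T k \<le> (1 + r * k\<^sup>2) * (pi / ((1 - \<bar>k\<bar> * T)\<^sup>2 * (k - a)))"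
    unfolding J_T_def using f p by (rule mult_left_mono)
  also have "\<dots> = pi * (1 + r * k\<^sup>2) / (k - a) / (1 - \<bar>k\<bar> * T)\<^sup>2"
    by (simp add: field_simps)
  finally show ?thesis .
qed

lemma J0_identity:
  fixes a r k s :: real
  assumes r: "r > 0" and s: "s > 0" and ss: "s\<^sup>2 = a\<^sup>2 + 1 / r" and k: "a < k"
  shows "pi * (1 + r * k\<^sup>2) / (k - a) - pi * (1 + r * (a + s)\<^sup>2) / s = pi * r * (k - (a + s))\<^sup>2 / (k - a)"
proof -
  have rs: "r * s\<^sup>2 = r * a\<^sup>2 + 1" using ss r by (simp add: field_simps)
  have "(1 + r * k\<^sup>2) * s - (1 + r * (a + s)\<^sup>2) * (k - a) = r * s * (k - (a + s))\<^sup>2"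
    using rs by algebra
  note eq = this
  have ka: "k - a \<noteq> 0" using k by simp
  have "pi * (1 + r * k\<^sup>2) / (k - a) - pi * (1 + r * (a + s)\<^sup>2) / s
      = pi * ((1 + r * k\<^sup>2) * s - (1 + r * (a + s)\<^sup>2) * (k - a)) / ((k - a) * s)"
    using s ka by (simp add: diff_frac_eq algebra_simps)
  also have "\<dots> = pi * (r * s * (k - (a + s))\<^sup>2) / ((k - a) * s)" by (simp only: eq)
  also have "\<dots> = pi * r * (k - (a + s))\<^sup>2 / (k - a)" using s ka by simp
  finally show ?thesis .
qed



theorem proposition5:
  fixes a r :: real
  assumes "r > 0"
  defines "k0 \<equiv> a + sqrt (a\<^sup>2 + 1 / r)"
  shows "(\<forall>\<^sub>F T in at_right 0. \<exists>k. is_kopt a r T k) \<and>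
         (\<forall>kopt :: real \<Rightarrow> real.
            (\<forall>\<^sub>F T in at_right 0. is_kopt a r T (kopt T)) \<longrightarrow>
            ((\<lambda>T. kopt T / (k0 - (a * k0 + 1 / r) * T)) \<longlongrightarrow> 1) (at_right 0))"
proof -
  note r = \<open>r > 0\<close>
  define s where "s = sqrt (a\<^sup>2 + 1 / r)"
  have ss: "s\<^sup>2 = a\<^sup>2 + 1 / r" using r by (simp add: s_def add_nonneg_nonneg)
  have "\<bar>a\<bar>\<^sup>2 < s\<^sup>2" using ss r by simp
  moreover have "s \<ge> 0" using r by (simp add: s_def add_nonneg_nonneg)
  ultimately have sa: "\<bar>a\<bar> < s" by (rule power_less_imp_less_base)
  have spos: "s > 0" using sa by linarith
  have k0s: "k0 = a + s" by (simp add: k0_def s_def)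
  have k0pos: "k0 > 0" using sa k0s by linarith
  have k0a: "a < k0" using spos k0s by linarith
  define J0 where "J0 k = pi * (1 + r * k\<^sup>2) / (k - a)" for k
  define M0 where "M0 = J0 k0"
  have M0pos: "M0 > 0" unfolding M0_def J0_def using k0a r by (simp add: add_pos_nonneg)
  have J0id: "J0 k - M0 = pi * r * (k - k0)\<^sup>2 / (k - a)" if "a < k" for k
    unfolding J0_def M0_def k0s using J0_identity[OF r spos ss that] by simp
  define K where "K = \<bar>a\<bar> + k0 + 1 + 400 * M0 / (pi * r)"
  have K1: "K \<ge> \<bar>a\<bar> + k0 + 1" unfolding K_def using M0pos r by simp
  have K2: "K * (pi * r) \<ge> 400 * M0" unfolding K_def using M0pos r k0pos
    by (simp add: distrib_right)
  define \<delta> where "\<delta> = min (s / 2) (min 1 (pi / (32 * M0)))"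
  have dpos: "\<delta> > 0" unfolding \<delta>_def using spos M0pos by simp
  have ds: "\<delta> < s" "\<delta> \<le> 1" "\<delta> \<le> pi / (32 * M0)" unfolding \<delta>_def using spos by auto
  define T0 where "T0 = 1 / (2 * (\<bar>a\<bar> + K))"
  have aKpos: "\<bar>a\<bar> + K > 0" using K1 k0pos by linarith
  have T0pos: "T0 > 0" unfolding T0_def using aKpos by simp

  have small: "K < k_u a T \<and> \<bar>a\<bar> * T < 1 \<and> J_T a r T k0 \<le> 4 * M0
      \<and> (\<forall>k. a < k \<and> k < k_u a T \<and> \<not> (a + \<delta> \<le> k \<and> k \<le> K) \<longrightarrow> 4 * M0 < J_T a r T k)
      \<and> (\<forall>k. a < k \<and> k < k_u a T \<longrightarrow> J0 k / (1 + \<bar>k\<bar> * T)\<^sup>2 \<le> J_T a r T k)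
      \<and> continuous_on {a + \<delta>..K} (J_T a r T)"
    if T: "0 < T" "T < T0" for T
  proof -
    have "T * (2 * (\<bar>a\<bar> + K)) < 1" using T(2) aKpos unfolding T0_def by (simp add: less_divide_eq)
    then have hT: "(\<bar>a\<bar> + K) * T < 1/2" by (simp add: algebra_simps)
    have Kpos: "K > 0" using K1 k0pos by linarith
    have dist: "(\<bar>a\<bar> + K) * T = \<bar>a\<bar> * T + K * T" by (simp add: distrib_right)
    have "K * T > 0" "\<bar>a\<bar> * T \<ge> 0" using Kpos T by auto
    then have aT: "\<bar>a\<bar> * T < 1" and KT: "K * T < 1/2" using hT dist by linarith+
    have "k0 * T \<le> K * T" using K1 T by (intro mult_right_mono) auto
    then have k0T: "k0 * T \<le> 1/2" using KT by linarith
    have kuK: "K < k_u a T"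
    proof -
      have "K < 1 / T" using KT T by (simp add: less_divide_eq)
      then show ?thesis using ku_props(3)[OF T(1) aT] by linarith
    qed
    have Jk0: "J_T a r T k0 \<le> 4 * M0"
    proof -
      have "J_T a r T k0 \<le> M0 / (1 - \<bar>k0\<bar> * T)\<^sup>2"
        using J_upper[of T a k0 r] T k0a k0T k0pos r unfolding M0_def J0_def by simp
      also have "\<dots> \<le> M0 / (1/2)\<^sup>2"
      proof (rule divide_left_mono)
        show "(1/2)\<^sup>2 \<le> (1 - \<bar>k0\<bar> * T)\<^sup>2" using k0T k0pos by (intro power_mono) auto
      qed (use M0pos k0T k0pos in auto)
      finally show ?thesis by (simp add: power2_eq_square)
    qed
    have pT: "1 + \<bar>k\<bar> * T \<noteq> 0" for k
    proof -
      have "0 \<le> \<bar>k\<bar> * T" using T by simp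
      then show ?thesis by linarith
    qed
    have low: "J0 k / (1 + \<bar>k\<bar> * T)\<^sup>2 \<le> J_T a r T k" if "a < k" "k < k_u a T" for k
      using J_lower[OF T(1) aT that r] unfolding J0_def .
    have J0nn: "J0 k \<ge> 0" if "a < k" for k unfolding J0_def using that r by (simp add: add_nonneg_nonneg)
    have out: "4 * M0 < J_T a r T k" if k: "a < k" "k < k_u a T" "\<not> (a + \<delta> \<le> k \<and> k \<le> K)" for k
    proof (cases "k < a + \<delta>")
      case True
      have "\<bar>k\<bar> \<le> \<bar>a\<bar> + 1" using True k ds by auto
      then have "\<bar>k\<bar> * T \<le> (\<bar>a\<bar> + K) * T" using K1 k0pos T by (intro mult_right_mono) auto
      then have "1 + \<bar>k\<bar> * T \<le> 2" using hT by linarith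
      then have sq4: "(1 + \<bar>k\<bar> * T)\<^sup>2 \<le> 2\<^sup>2" using T by (intro power_mono) auto
      have "J0 k \<ge> pi / (k - a)" unfolding J0_def using k r
        by (intro divide_right_mono) (auto simp: add_nonneg_nonneg)
      moreover have "pi / (k - a) > pi / \<delta>" using True k by (intro divide_strict_left_mono) auto
      moreover have "pi / \<delta> \<ge> 32 * M0" using ds(3) dpos M0pos by (simp add: le_divide_eq mult.commute)
      ultimately have "J0 k > 32 * M0" by linarith
      then have g1: "J0 k / 2\<^sup>2 > 8 * M0" by simp
      have g2: "J0 k / 2\<^sup>2 \<le> J0 k / (1 + \<bar>k\<bar> * T)\<^sup>2"
        using sq4 J0nn[OF k(1)] T pT[of k] by (intro divide_left_mono) auto
      show ?thesis using g1 g2 low[OF k(1,2)] M0pos by linarith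
    next
      case False
      then have kK: "K < k" using k by auto
      have kpos: "k > 0" using kK K1 k0pos by linarith
      have "k * T \<le> k_u a T * T" using k T by (intro mult_right_mono) auto
      also have "\<dots> \<le> \<bar>a\<bar> * T + pi" by (rule ku_props(5)[OF T(1) aT])
      finally have "1 + \<bar>k\<bar> * T \<le> 6" using aT kpos pi_less_4 by simp
      then have sq: "(1 + \<bar>k\<bar> * T)\<^sup>2 \<le> 6\<^sup>2" using T by (intro power_mono) auto
      have "- a \<le> \<bar>a\<bar>" by simp
      then have "k - a \<le> 2 * k" using kK K1 k0pos by linarith
      have "J0 k \<ge> pi * (r * k\<^sup>2) / (k - a)" unfolding J0_def using k r
        by (intro divide_right_mono) auto
      moreover have "pi * (r * k\<^sup>2) / (k - a) \<ge> pi * (r * k\<^sup>2) / (2 * k)"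
        using \<open>k - a \<le> 2 * k\<close> k r by (intro divide_left_mono) auto
      moreover have "pi * (r * k\<^sup>2) / (2 * k) = pi * r * k / 2" using kpos by (simp add: power2_eq_square)
      moreover have "pi * r * k / 2 > pi * r * K / 2" using kK r by simp
      moreover have "pi * r * K / 2 \<ge> 200 * M0" using K2 by (simp add: algebra_simps)
      ultimately have "J0 k > 200 * M0" by linarith
      then have g1: "J0 k / 6\<^sup>2 > 5 * M0" using M0pos by simp
      have g2: "J0 k / 6\<^sup>2 \<le> J0 k / (1 + \<bar>k\<bar> * T)\<^sup>2"
        using sq J0nn[OF k(1)] T pT[of k] by (intro divide_left_mono) auto
      show ?thesis using g1 g2 low[OF k(1,2)] M0pos by linarith
    qed
    have cont: "continuous_on {a + \<delta>..K} (J_T a r T)"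
      by (rule J_cont) (use T dpos K1 k0pos hT in auto)
    show ?thesis using kuK aT Jk0 out low cont by blast
  qed
  have evT: "\<forall>\<^sub>F T in at_right 0. 0 < T \<and> T < T0"
    using T0pos by (intro eventually_at_rightI[of 0 T0]) auto
  have k0in: "a + \<delta> \<le> k0" "k0 \<le> K" using ds k0s K1 by auto

  have ex: "\<exists>k. is_kopt a r T k" if T: "0 < T" "T < T0" for T
  proof -
    note sm = small[OF T]
    obtain km where km: "km \<in> {a + \<delta>..K}" "\<And>y. y \<in> {a + \<delta>..K} \<Longrightarrow> J_T a r T km \<le> J_T a r T y"
      using continuous_attains_inf[OF compact_Icc _ conjunct2[OF conjunct2[OF conjunct2[OF conjunct2[OF conjunct2[OF sm]]]]]] k0in
      by fastforce
    have "is_kopt a r T km"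
      unfolding is_kopt_def
    proof (intro conjI ballI)
      show "km \<in> {a<..<k_u a T}" using km(1) dpos sm by auto
      fix k' assume k': "k' \<in> {a<..<k_u a T}"
      show "J_T a r T km \<le> J_T a r T k'"
      proof (cases "a + \<delta> \<le> k' \<and> k' \<le> K")
        case True then show ?thesis using km(2) by auto
      next
        case False
        then have "4 * M0 < J_T a r T k'" using sm k' by auto
        moreover have "J_T a r T km \<le> J_T a r T k0" using km(2) k0in by auto
        ultimately show ?thesis using sm by linarith
      qed
    qed
    then show ?thesis by blast
  qed
  have part1: "\<forall>\<^sub>F T in at_right 0. \<exists>k. is_kopt a r T k"
    using evT by eventually_elim (auto intro: ex)

  define K' where "K' = \<bar>a\<bar> + K"
  define E where "E T = (M0 / (1 - k0 * T)\<^sup>2 * (1 + K' * T)\<^sup>2 - M0) * (K - a) / (pi * r)" for T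
  have Elim: "(E \<longlongrightarrow> 0) (at_right 0)"
  proof -
    have "(E \<longlongrightarrow> E 0) (at_right 0)" unfolding E_def
      using r by (intro tendsto_intros) auto
    moreover have "E 0 = 0" by (simp add: E_def)
    ultimately show ?thesis by simp
  qed
  have part2: "((\<lambda>T. kopt T / (k0 - (a * k0 + 1 / r) * T)) \<longlongrightarrow> 1) (at_right 0)"
    if kev: "\<forall>\<^sub>F T in at_right 0. is_kopt a r T (kopt T)" for kopt
  proof -
    have bnd: "(kopt T - k0)\<^sup>2 \<le> E T" if T: "0 < T" "T < T0" and ko: "is_kopt a r T (kopt T)" for T
    proof -
      note sm = small[OF T]
      define k where "k = kopt T"
      have kin: "a < k" "k < k_u a T" using ko by (auto simp: is_kopt_def k_def)
      have k0i: "k0 \<in> {a<..<k_u a T}" using k0a k0in sm by auto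
      have Jk: "J_T a r T k \<le> J_T a r T k0" using ko k0i by (auto simp: is_kopt_def k_def)
      then have "J_T a r T k \<le> 4 * M0" using sm by linarith
      then have kI: "a + \<delta> \<le> k" "k \<le> K" using sm kin by force+
      have kK': "\<bar>k\<bar> \<le> K'" unfolding K'_def using kI dpos K1 k0pos by auto
      have "T * (2 * (\<bar>a\<bar> + K)) < 1" using T(2) aKpos unfolding T0_def by (simp add: less_divide_eq)
      then have hT: "K' * T < 1/2" unfolding K'_def by (simp add: algebra_simps)
      have "k0 * T \<le> K' * T" using K1 T unfolding K'_def by (intro mult_right_mono) auto
      then have k0T: "k0 * T < 1" using hT by linarith
      have up: "J_T a r T k0 \<le> M0 / (1 - k0 * T)\<^sup>2"
        using J_upper[of T a k0 r] T k0a k0T k0pos r unfolding M0_def J0_def by simp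
      have lo: "J0 k / (1 + \<bar>k\<bar> * T)\<^sup>2 \<le> J_T a r T k" using sm kin by blast
      have "0 \<le> \<bar>k\<bar> * T" using T by simp
      then have "1 + \<bar>k\<bar> * T > 0" by linarith
      then have pp: "(1 + \<bar>k\<bar> * T)\<^sup>2 > 0" by simp
      have J1: "J0 k \<le> J_T a r T k * (1 + \<bar>k\<bar> * T)\<^sup>2" using lo pp by (simp add: divide_le_eq)
      have "J_T a r T k * (1 + \<bar>k\<bar> * T)\<^sup>2 \<le> M0 / (1 - k0 * T)\<^sup>2 * (1 + \<bar>k\<bar> * T)\<^sup>2"
        using Jk up pp by (intro mult_right_mono) auto
      then have "J0 k \<le> M0 / (1 - k0 * T)\<^sup>2 * (1 + \<bar>k\<bar> * T)\<^sup>2" using J1 by linarith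
      also have "\<dots> \<le> M0 / (1 - k0 * T)\<^sup>2 * (1 + K' * T)\<^sup>2"
      proof (rule mult_left_mono)
        have "\<bar>k\<bar> * T \<le> K' * T" using kK' T by (intro mult_right_mono) auto
        then show "(1 + \<bar>k\<bar> * T)\<^sup>2 \<le> (1 + K' * T)\<^sup>2" using T by (intro power_mono) auto
      qed (use M0pos in auto)
      finally have J0b: "J0 k - M0 \<le> M0 / (1 - k0 * T)\<^sup>2 * (1 + K' * T)\<^sup>2 - M0" by simp
      have id: "J0 k - M0 = pi * r * (k - k0)\<^sup>2 / (k - a)" by (rule J0id[OF kin(1)])
      have nn: "J0 k - M0 \<ge> 0" unfolding id using kin r by simp
      have "(k - k0)\<^sup>2 = (J0 k - M0) * (k - a) / (pi * r)" unfolding id using kin r by simp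
      also have "\<dots> \<le> (M0 / (1 - k0 * T)\<^sup>2 * (1 + K' * T)\<^sup>2 - M0) * (K - a) / (pi * r)"
      proof (rule divide_right_mono)
        have Y0: "0 \<le> M0 / (1 - k0 * T)\<^sup>2 * (1 + K' * T)\<^sup>2 - M0" using J0b nn by linarith
        have "k - a \<le> K - a" "0 \<le> k - a" using kI kin by auto
        then show "(J0 k - M0) * (k - a) \<le> (M0 / (1 - k0 * T)\<^sup>2 * (1 + K' * T)\<^sup>2 - M0) * (K - a)"
          using J0b Y0 by (intro mult_mono) auto
      qed (use r in simp)
      finally show ?thesis by (simp add: E_def k_def)
    qed
    have sq0: "((\<lambda>T. (kopt T - k0)\<^sup>2) \<longlongrightarrow> 0) (at_right 0)"
    proof (rule tendsto_sandwich[OF _ _ tendsto_const Elim])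
      show "\<forall>\<^sub>F T in at_right 0. 0 \<le> (kopt T - k0)\<^sup>2" by simp
      show "\<forall>\<^sub>F T in at_right 0. (kopt T - k0)\<^sup>2 \<le> E T"
        using evT kev by eventually_elim (auto intro!: bnd)
    qed
    have "((\<lambda>T. sqrt ((kopt T - k0)\<^sup>2)) \<longlongrightarrow> sqrt 0) (at_right 0)"
      by (rule tendsto_real_sqrt[OF sq0])
    then have "((\<lambda>T. \<bar>kopt T - k0\<bar>) \<longlongrightarrow> 0) (at_right 0)" by simp
    then have "((\<lambda>T. kopt T - k0) \<longlongrightarrow> 0) (at_right 0)" by (rule tendsto_rabs_zero_cancel)
    then have klim: "(kopt \<longlongrightarrow> k0) (at_right 0)" by (rule LIM_zero_cancel)
    have dlim: "((\<lambda>T. k0 - (a * k0 + 1 / r) * T) \<longlongrightarrow> k0 - (a * k0 + 1 / r) * 0) (at_right 0)"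
      by (intro tendsto_intros)
    have "((\<lambda>T. kopt T / (k0 - (a * k0 + 1 / r) * T)) \<longlongrightarrow> k0 / (k0 - (a * k0 + 1 / r) * 0)) (at_right 0)"
      by (rule tendsto_divide[OF klim dlim]) (use k0pos in simp)
    then show ?thesis using k0pos by simp
  qed
  show ?thesis using part1 part2 by blast
qed

end
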